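(* Let $q\in\mathscr{P}_2(\mathbb{R}^d)$ not give mass to small sets, and let $\psi:\mathbb{R}^d\to(-\infty,+\infty]$ be a proper convex function. Then \[ \sup_{p\in\mathscr{P}_2(\mathbb{R}^d)}\Big(\mathrm{MCov}(p,q)-\int\psi\,dp\Big)=\int\psi^\ast\,dq. \]
   Context: $\mathscr{P}_2(\mathbb{R}^d)$: Borel probability measures with finite second moment. $q$ does not give mass to small sets: $q(A)=0$ for measurable $A$ of Hausdorff dimension $\le d-1$. $\mathrm{MCov}(p,q)\coloneqq\sup_{\tilde\pi\in\mathsf{Cpl}(p,q)}\int\langle y,z\rangle\,d\tilde\pi$ over couplings. A proper convex function is a convex $\psi$ with $\operatorname{dom}\psi=\{\psi<+\infty\}\neq\varnothing$. $\psi^\ast(x)\coloneqq\sup_y(\langle x,y\rangle-\psi(y))$. *)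

theory Defs
  imports "HOL-Probability.Probability"
begin

definition P2 :: "'a::euclidean_space measure set" where
  "P2 = {p. prob_space p \<and> sets p = sets borel \<and>
            (\<integral>\<^sup>+ x. ennreal ((norm x)\<^sup>2) \<partial>p) < \<infinity>}"

definition Cpl :: "'a::euclidean_space measure \<Rightarrow> 'a measure \<Rightarrow> ('a \<times> 'a) measure set" where
  "Cpl p q = {\<pi>. prob_space \<pi> \<and> sets \<pi> = sets (borel \<Otimes>\<^sub>M borel) \<and>
                 distr \<pi> borel fst = p \<and> distr \<pi> borel snd = q}"

definition MCov :: "'a::euclidean_space measure \<Rightarrow> 'a measure \<Rightarrow> ereal" where
  "MCov p q = (SUP \<pi>\<in>Cpl p q. ereal (\<integral> yz. fst yz \<bullet> snd yz \<partial>\<pi>))"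

definition ext_integral :: "'a measure \<Rightarrow> ('a \<Rightarrow> ereal) \<Rightarrow> ereal" where
  "ext_integral M f =
     enn2ereal (\<integral>\<^sup>+ x. e2ennreal (f x) \<partial>M) - enn2ereal (\<integral>\<^sup>+ x. e2ennreal (- f x) \<partial>M)"

definition proper_convex :: "('a::euclidean_space \<Rightarrow> ereal) \<Rightarrow> bool" where
  "proper_convex \<psi> \<longleftrightarrow>
     (\<forall>x. \<psi> x \<noteq> -\<infinity>) \<and> (\<exists>x. \<psi> x < \<infinity>) \<and>
     (\<forall>x y t. 0 < t \<and> t < 1 \<longrightarrow>
        \<psi> (t *\<^sub>R x + (1 - t) *\<^sub>R y) \<le> ereal t * \<psi> x + ereal (1 - t) * \<psi> y)"

definition conjugate :: "('a::euclidean_space \<Rightarrow> ereal) \<Rightarrow> 'a \<Rightarrow> ereal" where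
  "conjugate \<psi> x = (SUP y. ereal (x \<bullet> y) - \<psi> y)"

definition hausdorff_content :: "real \<Rightarrow> real \<Rightarrow> 'a::euclidean_space set \<Rightarrow> ennreal" where
  "hausdorff_content s \<delta> A =
     (INF C\<in>{C :: nat \<Rightarrow> 'a set. A \<subseteq> (\<Union>n. C n) \<and> (\<forall>n. diameter (C n) \<le> \<delta>)}.
        (\<Sum>n. ennreal (diameter (C n) powr s)))"

definition hausdorff_measure :: "real \<Rightarrow> 'a::euclidean_space set \<Rightarrow> ennreal" where
  "hausdorff_measure s A = (SUP \<delta>\<in>{0<..}. hausdorff_content s \<delta> A)"

text \<open>Hausdorff dimension: inf of s > 0 with H^s(A) = 0 (equal to the usual inf over s \<ge> 0).\<close>
definition hausdorff_dim :: "'a::euclidean_space set \<Rightarrow> ereal" where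
  "hausdorff_dim A = Inf (ereal ` {s. 0 < s \<and> hausdorff_measure s A = 0})"

definition no_mass_small_sets :: "'a::euclidean_space measure \<Rightarrow> bool" where
  "no_mass_small_sets q \<longleftrightarrow>
     (\<forall>A\<in>sets q. hausdorff_dim A \<le> ereal (real DIM('a) - 1) \<longrightarrow> emeasure q A = 0)"

end

theory Submission
  imports Defs
begin

lemma enn2ereal_fin: "x < \<infinity> \<Longrightarrow> enn2ereal x = ereal (enn2real x)"
  by (metis ennreal_enn2real enn2ereal_ennreal enn2real_nonneg infinity_ennreal_def less_top)

lemma ext_integral_real:
  fixes v :: "'b \<Rightarrow> real"
  assumes ae: "AE x in M. f x = ereal (v x)" and iv: "integrable M v"
  shows "ext_integral M f = ereal (\<integral>x. v x \<partial>M)"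
proof -
  have 1: "(\<integral>\<^sup>+ x. e2ennreal (f x) \<partial>M) = (\<integral>\<^sup>+ x. ennreal (v x) \<partial>M)"
    by (rule nn_integral_cong_AE) (use ae in auto)
  have 2: "(\<integral>\<^sup>+ x. e2ennreal (- f x) \<partial>M) = (\<integral>\<^sup>+ x. ennreal (- v x) \<partial>M)"
    by (rule nn_integral_cong_AE) (use ae in auto)
  have fin: "(\<integral>\<^sup>+ x. ennreal (norm (v x)) \<partial>M) < \<infinity>" using iv
    by (simp add: integrable_iff_bounded)
  have f1: "(\<integral>\<^sup>+ x. ennreal (v x) \<partial>M) < \<infinity>"
    by (rule le_less_trans[OF nn_integral_mono fin]) (auto intro: ennreal_leI)
  have f2: "(\<integral>\<^sup>+ x. ennreal (- v x) \<partial>M) < \<infinity>"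
    by (rule le_less_trans[OF nn_integral_mono fin]) (auto intro: ennreal_leI)
  have "(\<integral>x. v x \<partial>M) = enn2real (\<integral>\<^sup>+ x. ennreal (v x) \<partial>M) - enn2real (\<integral>\<^sup>+ x. ennreal (- v x) \<partial>M)"
    using iv by (rule real_lebesgue_integral_def)
  then show ?thesis unfolding ext_integral_def 1 2 using f1 f2
    by (simp add: enn2ereal_fin)
qed

lemma pw1:
  fixes a :: real and F :: ereal
  assumes "ereal a \<le> F"
  shows "e2ennreal (F - ereal a) \<le> e2ennreal F + ennreal \<bar>a\<bar>"
proof (cases F)
  case (real r)
  show ?thesis
  proof (cases "r \<ge> 0")
    case True
    then have "ennreal (r - a) \<le> ennreal (r + \<bar>a\<bar>)" by (intro ennreal_leI) auto
    also have "\<dots> = ennreal r + ennreal \<bar>a\<bar>" using True by (simp add: ennreal_plus)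
    finally show ?thesis using real by simp
  next
    case False
    then have "ennreal (r - a) \<le> ennreal \<bar>a\<bar>" using assms real by (intro ennreal_leI) auto
    then show ?thesis using real False by (simp add: ennreal_neg)
  qed
qed (use assms in auto)

lemma pw2:
  fixes a :: real and F :: ereal
  assumes "ereal a \<le> F"
  shows "e2ennreal (- F) \<le> ennreal (- a)"
proof (cases F)
  case (real r)
  then show ?thesis using assms by (auto intro!: ennreal_leI)
qed (use assms in \<open>auto simp: e2ennreal_neg\<close>)

lemma ext_integral_lower:
  fixes a :: "'b \<Rightarrow> real" and f :: "'b \<Rightarrow> ereal"
  assumes f[measurable]: "f \<in> borel_measurable M" and ia: "integrable M a"
    and le: "\<And>x. ereal (a x) \<le> f x"
  shows "ext_integral M f = ereal (\<integral>x. a x \<partial>M) + enn2ereal (\<integral>\<^sup>+ x. e2ennreal (f x - ereal (a x)) \<partial>M)"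
proof -
  have am[measurable]: "a \<in> borel_measurable M" using ia by auto
  have finabs: "(\<integral>\<^sup>+ x. ennreal \<bar>a x\<bar> \<partial>M) < \<infinity>" using ia
    by (simp add: integrable_iff_bounded)
  have finneg: "(\<integral>\<^sup>+ x. ennreal (- a x) \<partial>M) < \<infinity>"
    by (rule le_less_trans[OF nn_integral_mono finabs]) (auto intro: ennreal_leI)
  have negfin: "(\<integral>\<^sup>+ x. e2ennreal (- f x) \<partial>M) < \<infinity>"
    by (rule le_less_trans[OF nn_integral_mono finneg]) (use pw2 le in auto)
  show ?thesis
  proof (cases "(\<integral>\<^sup>+ x. e2ennreal (f x - ereal (a x)) \<partial>M) = \<infinity>")
    case True
    have "(\<integral>\<^sup>+ x. e2ennreal (f x - ereal (a x)) \<partial>M) \<le> (\<integral>\<^sup>+ x. e2ennreal (f x) + ennreal \<bar>a x\<bar> \<partial>M)"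
      by (rule nn_integral_mono) (use pw1 le in auto)
    also have "\<dots> = (\<integral>\<^sup>+ x. e2ennreal (f x) \<partial>M) + (\<integral>\<^sup>+ x. ennreal \<bar>a x\<bar> \<partial>M)"
      by (rule nn_integral_add) auto
    finally have "(\<integral>\<^sup>+ x. e2ennreal (f x) \<partial>M) = \<infinity>" using True finabs
      by (metis ennreal_add_eq_top infinity_ennreal_def neq_top_trans less_top)
    then show ?thesis unfolding ext_integral_def using True negfin
      by (simp add: enn2ereal_fin)
  next
    case False
    define w where "w x = real_of_ereal (f x - ereal (a x))" for x
    have wm[measurable]: "w \<in> borel_measurable M" unfolding w_def by measurable
    have ae: "AE x in M. e2ennreal (f x - ereal (a x)) \<noteq> \<infinity>"
      by (rule nn_integral_PInf_AE) (use False in auto)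
    have ae2: "AE x in M. f x = ereal (a x + w x) \<and> e2ennreal (f x - ereal (a x)) = ennreal (w x)"
    proof (rule eventually_mono[OF ae])
      fix x assume h: "e2ennreal (f x - ereal (a x)) \<noteq> \<infinity>"
      have "ereal (a x) \<le> f x" by (rule le)
      then show "f x = ereal (a x + w x) \<and> e2ennreal (f x - ereal (a x)) = ennreal (w x)"
        using h unfolding w_def by (cases "f x") auto
    qed
    have wnn: "0 \<le> w x" for x unfolding w_def using le[of x] by (cases "f x") auto
    have eqn: "(\<integral>\<^sup>+ x. e2ennreal (f x - ereal (a x)) \<partial>M) = (\<integral>\<^sup>+ x. ennreal (w x) \<partial>M)"
      by (rule nn_integral_cong_AE) (use ae2 in auto)
    have wfin: "(\<integral>\<^sup>+ x. ennreal (w x) \<partial>M) < \<infinity>" using False eqn by (simp add: less_top)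
    have iw: "integrable M w"
      by (rule integrableI_nn_integral_finite[OF wm, where x="enn2real (\<integral>\<^sup>+ x. ennreal (w x) \<partial>M)"])
        (use wnn wfin in \<open>auto simp: ennreal_enn2real\<close>)
    have "ext_integral M f = ereal (\<integral>x. a x + w x \<partial>M)"
      by (rule ext_integral_real) (use ae2 ia iw in auto)
    also have "\<dots> = ereal (\<integral>x. a x \<partial>M) + ereal (\<integral>x. w x \<partial>M)" using ia iw by simp
    also have "(\<integral>x. w x \<partial>M) = enn2real (\<integral>\<^sup>+ x. ennreal (w x) \<partial>M)"
      by (rule integral_eq_nn_integral) (use wnn in auto)
    finally show ?thesis unfolding eqn using wfin by (simp add: enn2ereal_fin)
  qed
qed

lemma e2ennreal_SUP:
  fixes X :: "nat \<Rightarrow> ereal"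
  shows "e2ennreal (SUP n. X n) = (SUP n. e2ennreal (X n))"
  using continuous_at_Sup_mono[of e2ennreal "range X"]
  by (simp add: image_comp mono_def e2ennreal_mono continuous_at_e2ennreal continuous_at_imp_continuous_at_within)

lemma enn2ereal_SUP:
  fixes X :: "nat \<Rightarrow> ennreal"
  shows "enn2ereal (SUP n. X n) = (SUP n. enn2ereal (X n))"
  using continuous_at_Sup_mono[of enn2ereal "range X"]
  by (simp add: image_comp mono_def less_eq_ennreal.rep_eq continuous_at_enn2ereal continuous_at_imp_continuous_at_within)

definition val :: "'a::real_inner \<Rightarrow> 'a \<times> real \<Rightarrow> real" where
  "val z p = z \<bullet> fst p - snd p"

lemma dense_SUP:
  fixes D S :: "('a::euclidean_space \<times> real) set"
  assumes "D \<subseteq> S" "S \<subseteq> closure D" "p \<in> S"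
  shows "ereal (val x p) \<le> (SUP d\<in>D. ereal (val x d))"
proof -
  from assms have "p \<in> closure D" by auto
  then obtain d where d: "\<And>n. d n \<in> D" "d \<longlonglongrightarrow> p" by (auto simp: closure_sequential)
  have "(\<lambda>n. val x (d n)) \<longlonglongrightarrow> val x p" unfolding val_def
    by (intro tendsto_intros d)
  then have "(\<lambda>n. ereal (val x (d n))) \<longlonglongrightarrow> ereal (val x p)" by simp
  then show ?thesis
    by (rule LIMSEQ_le_const2) (use d(1) in \<open>auto intro!: SUP_upper exI[of _ 0]\<close>)
qed

lemma conj_graph:
  assumes "\<And>y. \<psi> y \<noteq> -\<infinity>"
  shows "conjugate \<psi> x = (SUP p\<in>{(y, r). \<psi> y = ereal r}. ereal (val x p))"
  unfolding conjugate_def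
proof (rule antisym)
  show "(SUP y. ereal (x \<bullet> y) - \<psi> y) \<le> (SUP p\<in>{(y, r). \<psi> y = ereal r}. ereal (val x p))"
  proof (rule SUP_least)
    fix y
    show "ereal (x \<bullet> y) - \<psi> y \<le> (SUP p\<in>{(y, r). \<psi> y = ereal r}. ereal (val x p))"
    proof (cases "\<psi> y")
      case (real r)
      then have "ereal (x \<bullet> y) - \<psi> y = ereal (val x (y, r))" by (simp add: val_def)
      also have "\<dots> \<le> (SUP p\<in>{(y, r). \<psi> y = ereal r}. ereal (val x p))"
        by (rule SUP_upper) (use real in auto)
      finally show ?thesis .
    qed (use assms in auto)
  qed
  show "(SUP p\<in>{(y, r). \<psi> y = ereal r}. ereal (val x p)) \<le> (SUP y. ereal (x \<bullet> y) - \<psi> y)"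
  proof (rule SUP_least)
    fix p assume "p \<in> {(y, r). \<psi> y = ereal r}"
    then obtain y r where p: "p = (y, r)" "\<psi> y = ereal r" by auto
    then have "ereal (val x p) = ereal (x \<bullet> y) - \<psi> y" by (simp add: val_def)
    also have "\<dots> \<le> (SUP y. ereal (x \<bullet> y) - \<psi> y)" by (rule SUP_upper) auto
    finally show "ereal (val x p) \<le> \<dots>" .
  qed
qed

lemma countable_dense_enum:
  fixes S :: "('a::euclidean_space \<times> real) set"
  assumes "S \<noteq> {}"
  obtains e :: "nat \<Rightarrow> 'a \<times> real" where "\<And>n. e n \<in> S"
    "\<And>x. (SUP p\<in>S. ereal (val x p)) = (SUP n. ereal (val x (e n)))"
proof -
  obtain D where D: "countable D" "D \<subseteq> S" "S \<subseteq> closure D" by (rule separable)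
  have "D \<noteq> {}" using D assms by auto
  define e where "e = from_nat_into D"
  have r: "range e = D" unfolding e_def using D \<open>D \<noteq> {}\<close> by (simp add: range_from_nat_into)
  show ?thesis
  proof
    show "e n \<in> S" for n using r D by auto
    fix x
    show "(SUP p\<in>S. ereal (val x p)) = (SUP n. ereal (val x (e n)))"
    proof (rule antisym)
      show "(SUP p\<in>S. ereal (val x p)) \<le> (SUP n. ereal (val x (e n)))"
      proof (rule SUP_least)
        fix p assume "p \<in> S"
        have eq: "(SUP d\<in>D. ereal (val x d)) = (SUP n. ereal (val x (e n)))"
          unfolding r[symmetric] by (simp add: image_comp)
        show "ereal (val x p) \<le> (SUP n. ereal (val x (e n)))"
          using dense_SUP[OF D(2,3) \<open>p \<in> S\<close>, of x] unfolding eq .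
      qed
      show "(SUP n. ereal (val x (e n))) \<le> (SUP p\<in>S. ereal (val x p))"
        using \<open>\<And>n. e n \<in> S\<close> by (auto intro!: SUP_least SUP_upper)
    qed
  qed
qed

primrec Bsel :: "(nat \<Rightarrow> 'a::real_inner \<times> real) \<Rightarrow> nat \<Rightarrow> 'a \<Rightarrow> 'a \<times> real" where
  "Bsel e 0 z = e 0"
| "Bsel e (Suc n) z = (if val z (Bsel e n z) < val z (e (Suc n)) then e (Suc n) else Bsel e n z)"

lemma Bsel_mem: "Bsel e n z \<in> e ` {..n}"
  by (induction n) auto

lemma Bsel_ge: "k \<le> n \<Longrightarrow> val z (e k) \<le> val z (Bsel e n z)"
proof (induction n)
  case (Suc n)
  then show ?case by (cases "k = Suc n") (auto simp: le_Suc_eq)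
qed auto

lemma Bsel_mono: "val z (Bsel e n z) \<le> val z (Bsel e (Suc n) z)"
  by auto

lemma Bsel_SUP: "(SUP n. ereal (val z (Bsel e n z))) = (SUP n. ereal (val z (e n)))"
proof (rule antisym)
  show "(SUP n. ereal (val z (Bsel e n z))) \<le> (SUP n. ereal (val z (e n)))"
  proof (rule SUP_least)
    fix n
    obtain k where "Bsel e n z = e k" using Bsel_mem[of e n z] by auto
    then show "ereal (val z (Bsel e n z)) \<le> (SUP n. ereal (val z (e n)))" by (auto intro: SUP_upper)
  qed
  show "(SUP n. ereal (val z (e n))) \<le> (SUP n. ereal (val z (Bsel e n z)))"
  proof (rule SUP_mono)
    fix n show "\<exists>m\<in>UNIV. ereal (val z (e n)) \<le> ereal (val z (Bsel e m z))"
      using Bsel_ge[of n n z e] by auto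
  qed
qed

lemma Bsel_measurable[measurable]:
  fixes e :: "nat \<Rightarrow> 'a::euclidean_space \<times> real"
  shows "Bsel e n \<in> borel_measurable borel"
proof (induction n)
  case 0
  then show ?case by simp
next
  case (Suc n)
  have fm: "fst \<in> borel_measurable (borel :: ('a \<times> real) measure)"
    by (intro borel_measurable_continuous_onI continuous_on_fst continuous_on_id)
  have sm: "snd \<in> borel_measurable (borel :: ('a \<times> real) measure)"
    by (intro borel_measurable_continuous_onI continuous_on_snd continuous_on_id)
  have [measurable]: "(\<lambda>z. fst (Bsel e n z)) \<in> borel_measurable borel"
    using measurable_compose[OF Suc fm] by simp
  have [measurable]: "(\<lambda>z. snd (Bsel e n z)) \<in> borel_measurable borel"
    using measurable_compose[OF Suc sm] by simp
  have vm1: "(\<lambda>z. val z (Bsel e n z)) \<in> borel_measurable borel" unfolding val_def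
    by (intro borel_measurable_diff borel_measurable_inner) (auto intro: borel_measurable_continuous_onI continuous_on_id)
  have vm2: "(\<lambda>z. val z (e (Suc n))) \<in> borel_measurable borel" unfolding val_def
    by (intro borel_measurable_continuous_onI continuous_intros)
  have c: "(\<lambda>z::'a. e (Suc n)) \<in> borel_measurable borel" by simp
  show ?case unfolding Bsel.simps
    by (rule measurable_If[OF c Suc]) (use borel_measurable_less[OF vm1 vm2] in simp)
qed

lemma P2_D:
  assumes "p \<in> P2"
  shows "prob_space p" "sets p = sets borel" "(\<integral>\<^sup>+ x. ennreal ((norm x)\<^sup>2) \<partial>p) < \<infinity>"
  using assms by (auto simp: P2_def)

lemma P2_meas:
  fixes p :: "'a::euclidean_space measure"
  assumes "p \<in> P2"
  shows "borel_measurable p = borel_measurable borel"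
  by (rule measurable_cong_sets) (use P2_D[OF assms] in auto)

lemma P2_meas_gen:
  fixes p :: "'a::euclidean_space measure"
  assumes "p \<in> P2"
  shows "measurable p N = measurable borel N"
  by (rule measurable_cong_sets) (use P2_D[OF assms] in auto)

lemma Bsel_fst_meas[measurable]:
  fixes e :: "nat \<Rightarrow> 'a::euclidean_space \<times> real"
  shows "(\<lambda>z. fst (Bsel e n z)) \<in> borel_measurable borel"
proof -
  have fm: "fst \<in> borel_measurable (borel :: ('a \<times> real) measure)"
    by (intro borel_measurable_continuous_onI continuous_on_fst continuous_on_id)
  show ?thesis using measurable_compose[OF Bsel_measurable fm] by simp
qed

lemma Bsel_snd_meas[measurable]:
  fixes e :: "nat \<Rightarrow> 'a::euclidean_space \<times> real"
  shows "(\<lambda>z. snd (Bsel e n z)) \<in> borel_measurable borel"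
proof -
  have fm: "snd \<in> borel_measurable (borel :: ('a \<times> real) measure)"
    by (intro borel_measurable_continuous_onI continuous_on_snd continuous_on_id)
  show ?thesis using measurable_compose[OF Bsel_measurable fm] by simp
qed

lemma Bsel_val_meas[measurable]:
  fixes e :: "nat \<Rightarrow> 'a::euclidean_space \<times> real"
  shows "(\<lambda>z. val z (Bsel e n z)) \<in> borel_measurable borel"
  unfolding val_def
  by (intro borel_measurable_diff borel_measurable_inner Bsel_fst_meas Bsel_snd_meas)
    (auto intro: borel_measurable_continuous_onI continuous_on_id)

lemma P2_int_sq:
  fixes p :: "'a::euclidean_space measure"
  assumes "p \<in> P2"
  shows "integrable p (\<lambda>x. (norm x)\<^sup>2)"
  unfolding integrable_iff_bounded using P2_D[OF assms] P2_meas[OF assms] by auto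

lemma P2_int_id:
  fixes p :: "'a::euclidean_space measure"
  assumes "p \<in> P2"
  shows "integrable p (\<lambda>x. x)"
proof -
  interpret prob_space p using P2_D[OF assms] by simp
  have i: "integrable p (\<lambda>x. 1 + (norm x)\<^sup>2)"
    by (rule Bochner_Integration.integrable_add[OF integrable_const P2_int_sq[OF assms]])
  have m: "(\<lambda>x. x) \<in> borel_measurable p" unfolding P2_meas[OF assms]
    by (intro borel_measurable_continuous_onI continuous_intros)
  have nb: "norm x \<le> norm (1 + (norm x)\<^sup>2)" for x :: 'a
  proof -
    have h: "0 \<le> (norm x - 1)\<^sup>2" by simp
    have "2 * norm x \<le> 1 + (norm x)\<^sup>2" using h by (simp add: power2_diff)
    then have "norm x \<le> 1 + (norm x)\<^sup>2" using norm_ge_zero[of x] by linarith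
    then show ?thesis by simp
  qed
  have b: "AE x in p. norm x \<le> norm (1 + (norm x)\<^sup>2)" by (rule AE_I2) (rule nb)
  show ?thesis by (rule Bochner_Integration.integrable_bound[OF i m b])
qed

lemma P2_int_aff:
  fixes p :: "'a::euclidean_space measure"
  assumes "p \<in> P2"
  shows "integrable p (\<lambda>x. val x c)"
proof -
  interpret prob_space p using P2_D[OF assms] by simp
  have "integrable p (\<lambda>x. x \<bullet> fst c)" by (intro integrable_inner_left) (rule P2_int_id[OF assms])
  moreover have "integrable p (\<lambda>x. snd c)" by (rule integrable_const)
  ultimately show ?thesis unfolding val_def by (rule Bochner_Integration.integrable_diff)
qed

lemma Cpl_D:
  assumes "\<pi> \<in> Cpl p q"
  shows "prob_space \<pi>" "sets \<pi> = sets (borel \<Otimes>\<^sub>M borel)" "distr \<pi> borel fst = p" "distr \<pi> borel snd = q"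
  using assms by (auto simp: Cpl_def)

lemma Cpl_meas:
  fixes \<pi> :: "('a::euclidean_space \<times> 'a) measure"
  assumes "\<pi> \<in> Cpl p q"
  shows "fst \<in> measurable \<pi> borel" "snd \<in> measurable \<pi> borel"
    "measurable \<pi> N = measurable (borel \<Otimes>\<^sub>M borel) N"
proof -
  show e: "measurable \<pi> N = measurable (borel \<Otimes>\<^sub>M borel) N"
    by (rule measurable_cong_sets) (use Cpl_D[OF assms] in auto)
  show "fst \<in> measurable \<pi> borel"
    by (simp add: measurable_cong_sets[OF Cpl_D(2)[OF assms] refl])
  show "snd \<in> measurable \<pi> borel"
    by (simp add: measurable_cong_sets[OF Cpl_D(2)[OF assms] refl])
qed

lemma Cpl_int_fst:
  fixes \<pi> :: "('a::euclidean_space \<times> 'a) measure" and f :: "'a \<Rightarrow> real"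
  assumes "\<pi> \<in> Cpl p q" "integrable p f" "p \<in> P2"
  shows "integrable \<pi> (\<lambda>w. f (fst w))" "(\<integral>w. f (fst w) \<partial>\<pi>) = (\<integral>x. f x \<partial>p)"
proof -
  have fm: "f \<in> borel_measurable borel" using assms(2) P2_meas[OF assms(3)] by auto
  show "integrable \<pi> (\<lambda>w. f (fst w))"
    using integrable_distr_eq[OF Cpl_meas(1)[OF assms(1)] fm] assms(2) Cpl_D(3)[OF assms(1)] by simp
  show "(\<integral>w. f (fst w) \<partial>\<pi>) = (\<integral>x. f x \<partial>p)"
    using integral_distr[OF Cpl_meas(1)[OF assms(1)] fm] Cpl_D(3)[OF assms(1)] by simp
qed

lemma Cpl_int_snd:
  fixes \<pi> :: "('a::euclidean_space \<times> 'a) measure" and f :: "'a \<Rightarrow> real"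
  assumes "\<pi> \<in> Cpl p q" "integrable q f" "q \<in> P2"
  shows "integrable \<pi> (\<lambda>w. f (snd w))" "(\<integral>w. f (snd w) \<partial>\<pi>) = (\<integral>x. f x \<partial>q)"
proof -
  have fm: "f \<in> borel_measurable borel" using assms(2) P2_meas[OF assms(3)] by auto
  show "integrable \<pi> (\<lambda>w. f (snd w))"
    using integrable_distr_eq[OF Cpl_meas(2)[OF assms(1)] fm] assms(2) Cpl_D(4)[OF assms(1)] by simp
  show "(\<integral>w. f (snd w) \<partial>\<pi>) = (\<integral>x. f x \<partial>q)"
    using integral_distr[OF Cpl_meas(2)[OF assms(1)] fm] Cpl_D(4)[OF assms(1)] by simp
qed

lemma Cpl_int_inner:
  fixes \<pi> :: "('a::euclidean_space \<times> 'a) measure"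
  assumes "\<pi> \<in> Cpl p q" "p \<in> P2" "q \<in> P2"
  shows "integrable \<pi> (\<lambda>w. fst w \<bullet> snd w)"
    "(\<integral>w. fst w \<bullet> snd w \<partial>\<pi>) \<le> ((\<integral>x. (norm x)\<^sup>2 \<partial>p) + (\<integral>x. (norm x)\<^sup>2 \<partial>q)) / 2"
proof -
  have i1: "integrable \<pi> (\<lambda>w. (norm (fst w))\<^sup>2)" by (rule Cpl_int_fst(1)[OF assms(1) P2_int_sq[OF assms(2)] assms(2)])
  have i2: "integrable \<pi> (\<lambda>w. (norm (snd w))\<^sup>2)" by (rule Cpl_int_snd(1)[OF assms(1) P2_int_sq[OF assms(3)] assms(3)])
  have bd: "\<bar>y \<bullet> z\<bar> \<le> ((norm y)\<^sup>2 + (norm z)\<^sup>2) / 2" for y z :: 'a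
  proof -
    have "\<bar>y \<bullet> z\<bar> \<le> norm y * norm z" by (rule Cauchy_Schwarz_ineq2)
    also have "\<dots> \<le> ((norm y)\<^sup>2 + (norm z)\<^sup>2) / 2"
      using sum_squares_bound[of "norm y" "norm z"] by (simp add: power2_eq_square)
    finally show ?thesis .
  qed
  have bd': "norm (y \<bullet> z) \<le> norm (((norm y)\<^sup>2 + (norm z)\<^sup>2) / 2)" for y z :: 'a
  proof -
    have "0 \<le> ((norm y)\<^sup>2 + (norm z)\<^sup>2) / 2" by simp
    then have "norm (((norm y)\<^sup>2 + (norm z)\<^sup>2) / 2) = ((norm y)\<^sup>2 + (norm z)\<^sup>2) / 2"
      by (simp only: real_norm_def abs_of_nonneg)
    then show ?thesis using bd[of y z] by simp
  qed
  have mi: "(\<lambda>w. fst w \<bullet> snd w) \<in> borel_measurable \<pi>"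
    unfolding Cpl_meas(3)[OF assms(1)] by measurable
  show ii: "integrable \<pi> (\<lambda>w. fst w \<bullet> snd w)"
  proof (rule Bochner_Integration.integrable_bound[OF integrable_divide[OF Bochner_Integration.integrable_add[OF i1 i2]] mi])
    show "AE w in \<pi>. norm (fst w \<bullet> snd w) \<le> norm (((norm (fst w))\<^sup>2 + (norm (snd w))\<^sup>2) / 2)"
      by (rule AE_I2) (rule bd')
  qed
  have bd3: "y \<bullet> z \<le> ((norm y)\<^sup>2 + (norm z)\<^sup>2) / 2" for y z :: 'a
    using abs_ge_self[of "y \<bullet> z"] bd[of y z] by linarith
  have "(\<integral>w. fst w \<bullet> snd w \<partial>\<pi>) \<le> (\<integral>w. ((norm (fst w))\<^sup>2 + (norm (snd w))\<^sup>2) / 2 \<partial>\<pi>)"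
    by (rule integral_mono[OF ii]) (use i1 i2 bd3 in auto)
  also have "\<dots> = ((\<integral>w. (norm (fst w))\<^sup>2 \<partial>\<pi>) + (\<integral>w. (norm (snd w))\<^sup>2 \<partial>\<pi>)) / 2"
    by (simp only: integral_divide_zero Bochner_Integration.integral_add[OF i1 i2])
  also have "\<dots> = ((\<integral>x. (norm x)\<^sup>2 \<partial>p) + (\<integral>x. (norm x)\<^sup>2 \<partial>q)) / 2"
    using Cpl_int_fst(2)[OF assms(1) P2_int_sq[OF assms(2)] assms(2)]
      Cpl_int_snd(2)[OF assms(1) P2_int_sq[OF assms(3)] assms(3)] by simp
  finally show "(\<integral>w. fst w \<bullet> snd w \<partial>\<pi>) \<le> ((\<integral>x. (norm x)\<^sup>2 \<partial>p) + (\<integral>x. (norm x)\<^sup>2 \<partial>q)) / 2" .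
qed

lemma MCov_bound:
  fixes p q :: "'a::euclidean_space measure"
  assumes "p \<in> P2" "q \<in> P2"
  shows "MCov p q \<le> ereal (((\<integral>x. (norm x)\<^sup>2 \<partial>p) + (\<integral>x. (norm x)\<^sup>2 \<partial>q)) / 2)"
  unfolding MCov_def
proof (rule SUP_least)
  fix \<pi> assume h: "\<pi> \<in> Cpl p q"
  show "ereal (\<integral>yz. fst yz \<bullet> snd yz \<partial>\<pi>) \<le> ereal (((\<integral>x. (norm x)\<^sup>2 \<partial>p) + (\<integral>x. (norm x)\<^sup>2 \<partial>q)) / 2)"
    using Cpl_int_inner(2)[OF h assms] by (simp only: ereal_less_eq)
qed

lemma ext_mono:
  assumes "\<And>x. f x \<le> h x"
  shows "ext_integral M f \<le> ext_integral M h"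
  unfolding ext_integral_def
proof (rule ereal_minus_mono)
  show "enn2ereal (\<integral>\<^sup>+ x. e2ennreal (f x) \<partial>M) \<le> enn2ereal (\<integral>\<^sup>+ x. e2ennreal (h x) \<partial>M)"
  proof -
    have "(\<integral>\<^sup>+ x. e2ennreal (f x) \<partial>M) \<le> (\<integral>\<^sup>+ x. e2ennreal (h x) \<partial>M)"
      by (rule nn_integral_mono) (simp add: e2ennreal_mono assms)
    then show ?thesis by (simp only: less_eq_ennreal.rep_eq)
  qed
  show "enn2ereal (\<integral>\<^sup>+ x. e2ennreal (- h x) \<partial>M) \<le> enn2ereal (\<integral>\<^sup>+ x. e2ennreal (- f x) \<partial>M)"
  proof -
    have "(\<integral>\<^sup>+ x. e2ennreal (- h x) \<partial>M) \<le> (\<integral>\<^sup>+ x. e2ennreal (- f x) \<partial>M)"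
      by (rule nn_integral_mono) (simp add: e2ennreal_mono assms)
    then show ?thesis by (simp only: less_eq_ennreal.rep_eq)
  qed
qed

lemma int_le_nn:
  fixes F :: "'b \<Rightarrow> real"
  assumes iF: "integrable M F" and le: "\<And>w. ereal (F w) \<le> enn2ereal (G w)"
  shows "ereal (\<integral>w. F w \<partial>M) \<le> enn2ereal (\<integral>\<^sup>+ w. G w \<partial>M)"
proof -
  have Fm[measurable]: "F \<in> borel_measurable M" using iF by auto
  have "(\<integral>w. F w \<partial>M) \<le> (\<integral>w. max (F w) 0 \<partial>M)"
    by (rule integral_mono[OF iF]) (use iF in auto)
  also have "\<dots> = enn2real (\<integral>\<^sup>+ w. ennreal (max (F w) 0) \<partial>M)"
    by (rule integral_eq_nn_integral) auto
  finally have 1: "(\<integral>w. F w \<partial>M) \<le> enn2real (\<integral>\<^sup>+ w. ennreal (max (F w) 0) \<partial>M)" .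
  have 2: "(\<integral>\<^sup>+ w. ennreal (max (F w) 0) \<partial>M) \<le> (\<integral>\<^sup>+ w. G w \<partial>M)"
  proof (rule nn_integral_mono)
    fix w
    have "ennreal (max (F w) 0) = e2ennreal (ereal (F w))"
      by (simp add: ennreal_max_0)
    also have "\<dots> \<le> e2ennreal (enn2ereal (G w))" by (rule e2ennreal_mono[OF le])
    finally show "ennreal (max (F w) 0) \<le> G w" by simp
  qed
  show ?thesis
  proof (cases "(\<integral>\<^sup>+ w. G w \<partial>M) = \<infinity>")
    case True then show ?thesis by simp
  next
    case False
    then have fin: "(\<integral>\<^sup>+ w. G w \<partial>M) < \<infinity>" by (simp add: less_top)
    have "enn2real (\<integral>\<^sup>+ w. ennreal (max (F w) 0) \<partial>M) \<le> enn2real (\<integral>\<^sup>+ w. G w \<partial>M)"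
      using 2 fin by (simp add: enn2real_mono)
    with 1 have "(\<integral>w. F w \<partial>M) \<le> enn2real (\<integral>\<^sup>+ w. G w \<partial>M)" by linarith
    then show ?thesis using fin by (simp add: enn2ereal_fin)
  qed
qed

lemma finite_supp_meas:
  fixes c :: "'a::euclidean_space \<Rightarrow> real"
  assumes "finite Y"
  shows "(\<lambda>y. if y \<in> Y then c y else 0) \<in> borel_measurable borel"
  using assms
proof (induction Y rule: finite_induct)
  case empty
  then show ?case by simp
next
  case (insert x Y)
  have eq: "(\<lambda>y. if y \<in> insert x Y then c y else 0) = (\<lambda>y. if y = x then c x else (if y \<in> Y then c y else 0))"
    by auto
  have "{y \<in> space borel. y = x} \<in> sets (borel :: 'a measure)"
    using borel_closed[OF closed_singleton[of x]] by (simp add: Collect_conv_if)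
  then show ?case unfolding eq
    by (intro measurable_If[OF measurable_const insert.IH]) auto
qed

theorem lemma2p6:
  fixes q :: "'a::euclidean_space measure" and \<psi> :: "'a \<Rightarrow> ereal"
  assumes "q \<in> P2"
    and "no_mass_small_sets q"
    and "proper_convex \<psi>"
  shows "(SUP p\<in>P2. MCov p q - ext_integral p \<psi>) = ext_integral q (conjugate \<psi>)"
proof -
  have q: "q \<in> P2" by fact
  interpret Q: prob_space q using P2_D[OF q] by simp
  have qm: "borel_measurable q = borel_measurable borel" by (rule P2_meas[OF q])
  have nm: "\<And>y. \<psi> y \<noteq> -\<infinity>" and pr: "\<exists>y. \<psi> y < \<infinity>"
    using assms(3) by (auto simp: proper_convex_def)
  define S where "S = {(y, r). \<psi> y = ereal r}"
  have "S \<noteq> {}"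
  proof -
    obtain y where "\<psi> y < \<infinity>" using pr by auto
    with nm[of y] obtain r where "\<psi> y = ereal r" by (cases "\<psi> y") auto
    then show ?thesis unfolding S_def by auto
  qed
  obtain e :: "nat \<Rightarrow> 'a \<times> real" where eS: "\<And>n. e n \<in> S"
    and eSUP: "\<And>x. (SUP p\<in>S. ereal (val x p)) = (SUP n. ereal (val x (e n)))"
    using countable_dense_enum[OF \<open>S \<noteq> {}\<close>] by blast
  define \<phi> where "\<phi> = conjugate \<psi>"
  have cs: "\<phi> x = (SUP n. ereal (val x (e n)))" for x
    unfolding \<phi>_def conj_graph[OF nm] eSUP[symmetric] S_def by simp
  have \<phi>m: "\<phi> \<in> borel_measurable borel"
  proof -
    have "(\<lambda>x. SUP n. ereal (val x (e n))) \<in> borel_measurable borel"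
      unfolding val_def by measurable
    moreover have "\<phi> = (\<lambda>x. SUP n. ereal (val x (e n)))" using cs by (simp add: fun_eq_iff)
    ultimately show ?thesis by simp
  qed
  define a where "a x = val x (e 0)" for x
  have a_le: "ereal (a x) \<le> \<phi> x" for x unfolding cs a_def by (rule SUP_upper) simp
  have ia: "integrable q a" unfolding a_def by (rule P2_int_aff[OF q])
  have am[measurable]: "a \<in> borel_measurable borel"
    unfolding a_def[abs_def] val_def by (intro borel_measurable_continuous_onI continuous_intros)
  have EQ: "ext_integral q \<phi> = ereal (\<integral>x. a x \<partial>q) + enn2ereal (\<integral>\<^sup>+ x. e2ennreal (\<phi> x - ereal (a x)) \<partial>q)"
    by (rule ext_integral_lower[OF _ ia a_le]) (use \<phi>m in \<open>simp add: P2_meas_gen[OF q]\<close>)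

  show ?thesis
    unfolding \<phi>_def[symmetric]
  proof (rule antisym)
    show "(SUP p\<in>P2. MCov p q - ext_integral p \<psi>) \<le> ext_integral q \<phi>"
    proof (cases "ext_integral q \<phi> = \<infinity>")
      case True then show ?thesis by simp
    next
      case False
      define Xq where "Xq = (\<integral>\<^sup>+ x. e2ennreal (\<phi> x - ereal (a x)) \<partial>q)"
      have EQ': "ext_integral q \<phi> = ereal (\<integral>x. a x \<partial>q) + enn2ereal Xq" unfolding Xq_def by (rule EQ)
      have Xqf: "Xq \<noteq> \<infinity>"
      proof
        assume "Xq = \<infinity>"
        then have "ext_integral q \<phi> = \<infinity>" unfolding EQ' by simp
        with False show False by simp
      qed
      have "\<exists>x. \<phi> x < \<infinity>"
      proof (rule ccontr)
        assume "\<not> (\<exists>x. \<phi> x < \<infinity>)"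
        then have inf: "\<phi> x = \<infinity>" for x by (simp add: not_less)
        have "Xq = (\<integral>\<^sup>+ x. \<infinity> \<partial>q)" unfolding Xq_def inf by simp
        also have "\<dots> = \<infinity>" by (simp add: Q.emeasure_space_1)
        finally show False using Xqf by simp
      qed
      then obtain x0 where x0: "\<phi> x0 < \<infinity>" by auto
      obtain s0 where s0: "\<phi> x0 = ereal s0"
        using x0 a_le[of x0] by (cases "\<phi> x0") auto
      define T where "T = {(z, s). \<phi> z = ereal s}"
      have "T \<noteq> {}" using s0 unfolding T_def by auto
      obtain e' :: "nat \<Rightarrow> 'a \<times> real" where e'T: "\<And>n. e' n \<in> T"
        and e'SUP: "\<And>y. (SUP p\<in>T. ereal (val y p)) = (SUP n. ereal (val y (e' n)))"
        using countable_dense_enum[OF \<open>T \<noteq> {}\<close>] by blast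
      define g where "g y = (SUP n. ereal (val y (e' n)))" for y
      have gm[measurable]: "g \<in> borel_measurable borel"
        unfolding g_def[abs_def] val_def by measurable
      define ap where "ap y = val y (e' 0)" for y
      have ap_le: "ereal (ap y) \<le> g y" for y unfolding g_def ap_def by (rule SUP_upper) simp
      have apm[measurable]: "ap \<in> borel_measurable borel"
        unfolding ap_def[abs_def] val_def by (intro borel_measurable_continuous_onI continuous_intros)
      have g_le: "g y \<le> \<psi> y" for y
        unfolding g_def
      proof (rule SUP_least)
        fix n
        obtain z s where zs: "e' n = (z, s)" "\<phi> z = ereal s" using e'T[of n] unfolding T_def by auto
        have "ereal (z \<bullet> y) - \<psi> y \<le> \<phi> z" unfolding \<phi>_def conjugate_def by (rule SUP_upper) simp
        then have "ereal (z \<bullet> y) - \<psi> y \<le> ereal s" using zs by simp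
        then show "ereal (val y (e' n)) \<le> \<psi> y"
          using nm[of y] zs by (cases "\<psi> y") (auto simp: val_def inner_commute)
      qed
      have FY: "ereal (y \<bullet> z) \<le> g y + \<phi> z" for y z
      proof (cases "\<phi> z")
        case (real s)
        then have "(z, s) \<in> T" unfolding T_def by simp
        then have "ereal (val y (z, s)) \<le> (SUP p\<in>T. ereal (val y p))" by (rule SUP_upper)
        then have "ereal (y \<bullet> z - s) \<le> g y" unfolding e'SUP g_def by (simp add: val_def)
        then show ?thesis using real ap_le[of y] by (cases "g y") auto
      next
        case PInf
        then show ?thesis using ap_le[of y] by (cases "g y") auto
      next
        case MInf
        then show ?thesis using a_le[of z] by simp
      qed
      show ?thesis
      proof (rule SUP_least)
        fix p :: "'a measure" assume p: "p \<in> P2"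
        interpret P: prob_space p using P2_D[OF p] by simp
        have iap: "integrable p ap" unfolding ap_def by (rule P2_int_aff[OF p])
        define Xp where "Xp = (\<integral>\<^sup>+ y. e2ennreal (g y - ereal (ap y)) \<partial>p)"
        have Ep: "ext_integral p g = ereal (\<integral>y. ap y \<partial>p) + enn2ereal Xp"
          unfolding Xp_def by (rule ext_integral_lower[OF _ iap ap_le]) (simp add: P2_meas_gen[OF p])
        have E\<psi>: "ext_integral p g \<le> ext_integral p \<psi>" by (rule ext_mono[OF g_le])
        have Mle: "MCov p q \<le> ext_integral p g + ext_integral q \<phi>"
          unfolding MCov_def
        proof (rule SUP_least)
          fix \<pi> :: "('a \<times> 'a) measure" assume pi: "\<pi> \<in> Cpl p q"
          define F where "F w = fst w \<bullet> snd w - ap (fst w) - a (snd w)" for w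
          have iin: "integrable \<pi> (\<lambda>w. fst w \<bullet> snd w)" by (rule Cpl_int_inner(1)[OF pi p q])
          have i1: "integrable \<pi> (\<lambda>w. ap (fst w))" and I1: "(\<integral>w. ap (fst w) \<partial>\<pi>) = (\<integral>y. ap y \<partial>p)"
            using Cpl_int_fst[OF pi iap p] by auto
          have i2: "integrable \<pi> (\<lambda>w. a (snd w))" and I2: "(\<integral>w. a (snd w) \<partial>\<pi>) = (\<integral>z. a z \<partial>q)"
            using Cpl_int_snd[OF pi ia q] by auto
          have iF: "integrable \<pi> F" unfolding F_def[abs_def]
            by (intro Bochner_Integration.integrable_diff iin i1 i2)
          have IF: "(\<integral>w. fst w \<bullet> snd w \<partial>\<pi>) = (\<integral>w. F w \<partial>\<pi>) + (\<integral>y. ap y \<partial>p) + (\<integral>z. a z \<partial>q)"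
          proof -
            have "(\<integral>w. F w \<partial>\<pi>) = (\<integral>w. fst w \<bullet> snd w \<partial>\<pi>) - (\<integral>w. ap (fst w) \<partial>\<pi>) - (\<integral>w. a (snd w) \<partial>\<pi>)"
              unfolding F_def using iin i1 i2 by (simp add: Bochner_Integration.integral_diff)
            then show ?thesis using I1 I2 by simp
          qed
          define G where "G w = e2ennreal (g (fst w) - ereal (ap (fst w))) + e2ennreal (\<phi> (snd w) - ereal (a (snd w)))" for w
          have FG: "ereal (F w) \<le> enn2ereal (G w)" for w
          proof -
            obtain y z where w: "w = (y, z)" by (cases w)
            have u: "0 \<le> g y - ereal (ap y)" using ap_le[of y] by (cases "g y") auto
            have v: "0 \<le> \<phi> z - ereal (a z)" using a_le[of z] by (cases "\<phi> z") auto
            have "enn2ereal (G w) = (g y - ereal (ap y)) + (\<phi> z - ereal (a z))"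
              unfolding G_def w using u v by (simp add: plus_ennreal.rep_eq enn2ereal_e2ennreal)
            moreover have "ereal (y \<bullet> z - ap y - a z) \<le> (g y - ereal (ap y)) + (\<phi> z - ereal (a z))"
              using FY[of y z] ap_le[of y] a_le[of z] by (cases "g y"; cases "\<phi> z") auto
            ultimately show ?thesis unfolding F_def w by simp
          qed
          have m1: "(\<lambda>w. e2ennreal (g (fst w) - ereal (ap (fst w)))) \<in> borel_measurable \<pi>"
            unfolding Cpl_meas(3)[OF pi] by measurable
          have m2: "(\<lambda>w. e2ennreal (\<phi> (snd w) - ereal (a (snd w)))) \<in> borel_measurable \<pi>"
            unfolding Cpl_meas(3)[OF pi] using \<phi>m am by measurable
          have "(\<integral>\<^sup>+ w. G w \<partial>\<pi>) = (\<integral>\<^sup>+ w. e2ennreal (g (fst w) - ereal (ap (fst w))) \<partial>\<pi>) + (\<integral>\<^sup>+ w. e2ennreal (\<phi> (snd w) - ereal (a (snd w))) \<partial>\<pi>)"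
            unfolding G_def by (rule nn_integral_add[OF m1 m2])
          also have "(\<integral>\<^sup>+ w. e2ennreal (g (fst w) - ereal (ap (fst w))) \<partial>\<pi>) = Xp"
          proof -
            have um: "(\<lambda>y. e2ennreal (g y - ereal (ap y))) \<in> borel_measurable borel" by measurable
            show ?thesis unfolding Xp_def
              using nn_integral_distr[OF Cpl_meas(1)[OF pi] um[folded measurable_cong_sets[OF sets_distr[of \<pi> borel fst] refl]]] Cpl_D(3)[OF pi] by simp
          qed
          also have "(\<integral>\<^sup>+ w. e2ennreal (\<phi> (snd w) - ereal (a (snd w))) \<partial>\<pi>) = Xq"
          proof -
            have um: "(\<lambda>z. e2ennreal (\<phi> z - ereal (a z))) \<in> borel_measurable borel" using \<phi>m am by measurable
            show ?thesis unfolding Xq_def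
              using nn_integral_distr[OF Cpl_meas(2)[OF pi] um[folded measurable_cong_sets[OF sets_distr[of \<pi> borel snd] refl]]] Cpl_D(4)[OF pi] by simp
          qed
          finally have GX: "(\<integral>\<^sup>+ w. G w \<partial>\<pi>) = Xp + Xq" .
          have "ereal (\<integral>w. F w \<partial>\<pi>) \<le> enn2ereal (Xp + Xq)"
            using int_le_nn[OF iF FG] unfolding GX .
          then have "ereal (\<integral>w. F w \<partial>\<pi>) \<le> enn2ereal Xp + enn2ereal Xq"
            by (simp add: plus_ennreal.rep_eq)
          then have hF: "ereal (\<integral>w. F w \<partial>\<pi>) + ereal (\<integral>y. ap y \<partial>p) + ereal (\<integral>z. a z \<partial>q)
              \<le> (enn2ereal Xp + enn2ereal Xq) + ereal (\<integral>y. ap y \<partial>p) + ereal (\<integral>z. a z \<partial>q)"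
            by (intro add_right_mono)
          have "ereal (\<integral>w. fst w \<bullet> snd w \<partial>\<pi>) = ereal (\<integral>w. F w \<partial>\<pi>) + ereal (\<integral>y. ap y \<partial>p) + ereal (\<integral>z. a z \<partial>q)"
            unfolding IF by simp
          also have "\<dots> \<le> (enn2ereal Xp + enn2ereal Xq) + ereal (\<integral>y. ap y \<partial>p) + ereal (\<integral>z. a z \<partial>q)"
            by (rule hF)
          also have "\<dots> = (ereal (\<integral>y. ap y \<partial>p) + enn2ereal Xp) + (ereal (\<integral>z. a z \<partial>q) + enn2ereal Xq)"
            by (simp add: ac_simps)
          finally have "ereal (\<integral>w. fst w \<bullet> snd w \<partial>\<pi>) \<le> (ereal (\<integral>y. ap y \<partial>p) + enn2ereal Xp) + (ereal (\<integral>z. a z \<partial>q) + enn2ereal Xq)" .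
          then show "ereal (\<integral>yz. fst yz \<bullet> snd yz \<partial>\<pi>) \<le> ext_integral p g + ext_integral q \<phi>"
            unfolding Ep EQ' .
        qed
        have MC: "MCov p q < \<infinity>" using MCov_bound[OF p q] by (auto simp: le_less_trans)
        have Eqn: "ext_integral q \<phi> \<noteq> -\<infinity>" unfolding EQ' by simp
        have Epn: "ext_integral p g \<noteq> -\<infinity>" unfolding Ep by simp
        have Mle2: "MCov p q \<le> ext_integral p \<psi> + ext_integral q \<phi>"
          using Mle E\<psi> by (meson add_right_mono order_trans)
        have E\<psi>n: "ext_integral p \<psi> \<noteq> -\<infinity>" using E\<psi> Epn by auto
        show "MCov p q - ext_integral p \<psi> \<le> ext_integral q \<phi>"
          using MC Mle2 False Eqn E\<psi>n
          by (cases "MCov p q"; cases "ext_integral p \<psi>"; cases "ext_integral q \<phi>") auto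
      qed
    qed
  next
    show "ext_integral q \<phi> \<le> (SUP p\<in>P2. MCov p q - ext_integral p \<psi>)"
    proof -
    define L where "L = (SUP p\<in>P2. MCov p q - ext_integral p \<psi>)"
    define h where "h n z = val z (Bsel e n z)" for n z
    have hS: "Bsel e n z \<in> S" for n z using Bsel_mem[of e n z] eS by auto
    have \<psi>B: "\<psi> (fst (Bsel e n z)) = ereal (snd (Bsel e n z))" for n z
      using hS[of n z] unfolding S_def by (cases "Bsel e n z") auto
    have hm[measurable]: "h n \<in> borel_measurable borel" for n
      unfolding h_def[abs_def] by (rule Bsel_val_meas)
    have ih: "integrable q (h n)" for n
    proof -
      have isum: "integrable q (\<lambda>z. \<Sum>k\<le>n. \<bar>val z (e k)\<bar>)"
        by (intro Bochner_Integration.integrable_sum integrable_abs P2_int_aff[OF q])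
      have hmq: "h n \<in> borel_measurable q" by (simp add: P2_meas_gen[OF q])
      have "norm (h n z) \<le> norm (\<Sum>k\<le>n. \<bar>val z (e k)\<bar>)" for z
      proof -
        obtain k where k: "k \<le> n" "Bsel e n z = e k" using Bsel_mem[of e n z] by auto
        have "\<bar>val z (e k)\<bar> \<le> (\<Sum>k\<le>n. \<bar>val z (e k)\<bar>)"
          by (rule member_le_sum) (use k in auto)
        then show ?thesis using k by (simp add: h_def)
      qed
      then show ?thesis by (intro Bochner_Integration.integrable_bound[OF isum hmq] AE_I2)
    qed
    have h_ge_a: "a z \<le> h n z" for n z using Bsel_ge[of 0 n z e] by (simp add: a_def h_def)
    have h_mono: "h n z \<le> h (Suc n) z" for n z unfolding h_def by (rule Bsel_mono)
    have hsup: "\<phi> z = (SUP n. ereal (h n z))" for z unfolding cs h_def Bsel_SUP ..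

    have key: "ereal (\<integral>z. h n z \<partial>q) \<le> L" for n
    proof -
      have sq: "sets q = sets borel" using P2_D[OF q] by simp
      define T where "T z = fst (Bsel e n z)" for z
      have Tb[measurable]: "T \<in> borel_measurable borel" unfolding T_def[abs_def] by (rule Bsel_fst_meas)
      have Tm: "T \<in> measurable q borel" by (simp add: P2_meas_gen[OF q])
      define pn where "pn = distr q borel T"
      define Y where "Y = fst ` e ` {..n}"
      have fY: "finite Y" unfolding Y_def by simp
      have TY: "T z \<in> Y" for z unfolding T_def Y_def using Bsel_mem[of e n z] by auto
      define c0 where "c0 y = (if y \<in> Y then real_of_ereal (\<psi> y) else 0)" for y
      have c0m: "c0 \<in> borel_measurable borel" unfolding c0_def[abs_def] by (rule finite_supp_meas[OF fY])
      have \<psi>Y: "\<psi> y = ereal (c0 y)" if "y \<in> Y" for y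
      proof -
        from that obtain k where k: "y = fst (e k)" by (auto simp: Y_def)
        have "\<psi> (fst (e k)) = ereal (snd (e k))" using eS[of k] unfolding S_def by (cases "e k") auto
        then show ?thesis using that k unfolding c0_def by simp
      qed
      have c0T: "c0 (T z) = snd (Bsel e n z)" for z
        using \<psi>Y[OF TY[of z]] \<psi>B[of n z] unfolding T_def by simp
      define K where "K = (\<Sum>y\<in>Y. (norm y)\<^sup>2)"
      have TK: "(norm (T z))\<^sup>2 \<le> K" for z
        unfolding K_def by (rule member_le_sum[OF TY]) (use fY in auto)
      have pnP: "prob_space pn" unfolding pn_def by (rule Q.prob_space_distr[OF Tm])
      have pn: "pn \<in> P2"
      proof -
        have "(\<integral>\<^sup>+ x. ennreal ((norm x)\<^sup>2) \<partial>pn) = (\<integral>\<^sup>+ z. ennreal ((norm (T z))\<^sup>2) \<partial>q)"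
          unfolding pn_def by (rule nn_integral_distr[OF Tm]) measurable
        also have "\<dots> \<le> (\<integral>\<^sup>+ z. ennreal K \<partial>q)"
          by (rule nn_integral_mono) (use TK in \<open>auto intro: ennreal_leI\<close>)
        also have "\<dots> < \<infinity>" by (simp add: Q.emeasure_space_1)
        finally show ?thesis unfolding P2_def using pnP by (simp add: pn_def)
      qed
      have AEY: "AE y in pn. y \<in> Y"
      proof -
        have Ys: "{y \<in> space borel. y \<in> Y} \<in> sets borel"
          using borel_closed[OF finite_imp_closed[OF fY]] by simp
        show ?thesis unfolding pn_def by (subst AE_distr_iff[OF Tm Ys]) (simp add: TY)
      qed
      have isnd: "integrable q (\<lambda>z. snd (Bsel e n z))"
      proof (rule Q.integrable_const_bound[where B="\<Sum>k\<le>n. \<bar>snd (e k)\<bar>"])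
        show "AE z in q. norm (snd (Bsel e n z)) \<le> (\<Sum>k\<le>n. \<bar>snd (e k)\<bar>)"
        proof (rule AE_I2)
          fix z
          obtain k where k: "k \<le> n" "Bsel e n z = e k" using Bsel_mem[of e n z] by auto
          have "\<bar>snd (e k)\<bar> \<le> (\<Sum>k\<le>n. \<bar>snd (e k)\<bar>)"
            by (rule member_le_sum) (use k in auto)
          then show "norm (snd (Bsel e n z)) \<le> (\<Sum>k\<le>n. \<bar>snd (e k)\<bar>)" using k by simp
        qed
        show "(\<lambda>z. snd (Bsel e n z)) \<in> borel_measurable q" by (simp add: P2_meas_gen[OF q])
      qed
      have ic0: "integrable pn c0"
        unfolding pn_def using integrable_distr_eq[OF Tm c0m] isnd c0T by simp
      have Ec: "ext_integral pn \<psi> = ereal (\<integral>z. snd (Bsel e n z) \<partial>q)"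
      proof -
        have "ext_integral pn \<psi> = ereal (\<integral>y. c0 y \<partial>pn)"
          by (rule ext_integral_real[OF _ ic0]) (rule eventually_mono[OF AEY], rule \<psi>Y)
        also have "(\<integral>y. c0 y \<partial>pn) = (\<integral>z. c0 (T z) \<partial>q)"
          unfolding pn_def by (rule integral_distr[OF Tm c0m])
        finally show ?thesis using c0T by simp
      qed
      define \<pi> where "\<pi> = distr q (borel \<Otimes>\<^sub>M borel) (\<lambda>z. (T z, z))"
      have idm: "(\<lambda>z. z) \<in> measurable q borel" by (rule measurable_ident_sets[OF sq])
      have Pm: "(\<lambda>z. (T z, z)) \<in> measurable q (borel \<Otimes>\<^sub>M borel)"
        by (rule measurable_Pair[OF Tm idm])
      have pic: "\<pi> \<in> Cpl pn q"
        unfolding Cpl_def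
      proof (intro CollectI conjI)
        show "prob_space \<pi>" unfolding \<pi>_def by (rule Q.prob_space_distr[OF Pm])
        show "sets \<pi> = sets (borel \<Otimes>\<^sub>M borel)" unfolding \<pi>_def by simp
        show "distr \<pi> borel fst = pn"
          unfolding \<pi>_def pn_def by (subst distr_distr[OF measurable_fst Pm]) (simp add: comp_def)
        have "distr \<pi> borel snd = distr q borel (\<lambda>z. z)"
          unfolding \<pi>_def by (subst distr_distr[OF measurable_snd Pm]) (simp add: comp_def)
        also have "\<dots> = q" by (rule distr_id2) (use sq in simp)
        finally show "distr \<pi> borel snd = q" .
      qed
      have inm: "(\<lambda>w. fst w \<bullet> snd w) \<in> borel_measurable (borel \<Otimes>\<^sub>M (borel :: 'a measure))"
        by measurable
      have Mge: "ereal (\<integral>z. T z \<bullet> z \<partial>q) \<le> MCov pn q"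
      proof -
        have "(\<integral>w. fst w \<bullet> snd w \<partial>\<pi>) = (\<integral>z. T z \<bullet> z \<partial>q)"
          unfolding \<pi>_def using integral_distr[OF Pm inm] by simp
        moreover have "ereal (\<integral>w. fst w \<bullet> snd w \<partial>\<pi>) \<le> MCov pn q"
          unfolding MCov_def by (rule SUP_upper[OF pic])
        ultimately show ?thesis by simp
      qed
      have hT: "h n z = T z \<bullet> z - snd (Bsel e n z)" for z
        unfolding h_def T_def val_def by (simp add: inner_commute)
      have iT: "integrable q (\<lambda>z. T z \<bullet> z)"
      proof -
        have "integrable q (\<lambda>z. h n z + snd (Bsel e n z))"
          by (rule Bochner_Integration.integrable_add[OF ih isnd])
        then show ?thesis by (simp add: hT)
      qed
      have "ereal (\<integral>z. h n z \<partial>q) = ereal (\<integral>z. T z \<bullet> z \<partial>q) - ereal (\<integral>z. snd (Bsel e n z) \<partial>q)"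
        unfolding hT using iT isnd by (simp add: Bochner_Integration.integral_diff)
      also have "\<dots> \<le> MCov pn q - ext_integral pn \<psi>"
        unfolding Ec by (rule ereal_minus_mono[OF Mge order_refl])
      also have "\<dots> \<le> L" unfolding L_def by (rule SUP_upper[OF pn])
      finally show ?thesis .
    qed

    have pt: "e2ennreal (\<phi> z - ereal (a z)) = (SUP n. ennreal (h n z - a z))" for z
    proof -
      have "\<phi> z - ereal (a z) = (SUP n. ereal (h n z) + ereal (- a z))"
        unfolding hsup by (subst SUP_ereal_add_left) (auto simp: minus_ereal_def)
      also have "\<dots> = (SUP n. ereal (h n z - a z))" by simp
      finally show ?thesis by (simp add: e2ennreal_SUP)
    qed
    have "(\<integral>\<^sup>+ z. e2ennreal (\<phi> z - ereal (a z)) \<partial>q) = (\<integral>\<^sup>+ z. (SUP n. ennreal (h n z - a z)) \<partial>q)"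
      by (simp add: pt)
    also have "\<dots> = (SUP n. \<integral>\<^sup>+ z. ennreal (h n z - a z) \<partial>q)"
    proof (rule nn_integral_monotone_convergence_SUP)
      show "incseq (\<lambda>n z. ennreal (h n z - a z))"
        by (rule incseq_SucI) (auto simp: le_fun_def intro!: ennreal_leI h_mono)
      show "(\<lambda>z. ennreal (h n z - a z)) \<in> borel_measurable q" for n
        by (simp add: P2_meas_gen[OF q])
    qed
    also have "\<dots> = (SUP n. ennreal (\<integral>z. h n z - a z \<partial>q))"
    proof -
      have "(\<integral>\<^sup>+ z. ennreal (h n z - a z) \<partial>q) = ennreal (\<integral>z. h n z - a z \<partial>q)" for n
        by (rule nn_integral_eq_integral)
          (use ih ia h_ge_a in \<open>auto intro!: Bochner_Integration.integrable_diff AE_I2\<close>)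
      then show ?thesis by simp
    qed
    finally have X: "(\<integral>\<^sup>+ z. e2ennreal (\<phi> z - ereal (a z)) \<partial>q) = (SUP n. ennreal (\<integral>z. h n z - a z \<partial>q))" .
    have nn: "0 \<le> (\<integral>z. h n z - a z \<partial>q)" for n
      by (rule Bochner_Integration.integral_nonneg) (use h_ge_a in auto)
    have "ext_integral q \<phi> = ereal (\<integral>x. a x \<partial>q) + (SUP n. ereal (\<integral>z. h n z - a z \<partial>q))"
      unfolding EQ X enn2ereal_SUP using nn by simp
    also have "\<dots> = (SUP n. ereal (\<integral>x. a x \<partial>q) + ereal (\<integral>z. h n z - a z \<partial>q))"
      by (rule SUP_ereal_add_right[symmetric]) auto
    also have "\<dots> = (SUP n. ereal (\<integral>z. h n z \<partial>q))"
      using ih ia by (simp add: Bochner_Integration.integral_diff)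
    also have "\<dots> \<le> L" by (rule SUP_least) (rule key)
    finally show ?thesis unfolding L_def .
    qed
  qed
qed

end
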